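(* Let $r_0\in\,]0,1[$, $A=\{z\in\mathbb{C}: r_0<|z|<1\}$, let $E\subset\partial A=\mathbb{T}\cup r_0\mathbb{T}$ be closed and of arclength measure $0$, let $f\colon E\to\mathbb{C}$ be continuous, and let $M\colon\partial A\to\,]0,\infty]$ be continuous with $|f|<M$ on $E$. Then there exists a continuous function $F$ on $\overline{A}$ that is holomorphic on $A$, with $|F|<M$ on $\partial A$ and $F|_E=f$.
   Context: $\mathbb{T}=\{z\in\mathbb{C}:|z|=1\}$. A set $E\subset\partial A$ has arclength measure $0$ if both $E\cap\mathbb{T}$ and $E\cap r_0\mathbb{T}$ have arclength measure $0$. *)

theory Defs
  imports "HOL-Complex_Analysis.Complex_Analysis" "HOL-Library.Extended_Real"
begin

text \<open>Arclength measure zero on the circle of radius r centred at 0: the preimage under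
  the arclength-proportional parametrisation t \<mapsto> r e^{it}, t in [0, 2 pi], is a
  Lebesgue null set.\<close>
definition circle_null :: "real \<Rightarrow> complex set \<Rightarrow> bool" where
  "circle_null r S \<longleftrightarrow>
     {t \<in> {0..2*pi}. complex_of_real r * cis t \<in> S} \<in> null_sets lborel"

definition annulus_bdry_null :: "real \<Rightarrow> complex set \<Rightarrow> bool" where
  "annulus_bdry_null r0 E \<longleftrightarrow>
     circle_null 1 (E \<inter> sphere 0 1) \<and> circle_null r0 (E \<inter> sphere 0 r0)"

end

theory Submission
  imports Defs
begin

lemma rpf_laurent:
  fixes h :: "complex \<Rightarrow> real"
  assumes "real_polynomial_function h" "r > 0"
  shows "\<exists>P. P holomorphic_on -{0} \<and> (\<forall>z\<in>sphere 0 r. P z = of_real (h z))"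
  using assms(1)
proof (induction h rule: real_polynomial_function.induct)
  case (linear h)
  have hz: "h z = Re z * h 1 + Im z * h \<i>" for z
  proof -
    have "z = Re z *\<^sub>R 1 + Im z *\<^sub>R \<i>"
      by (simp add: complex_eq_iff)
    then have "h z = h (Re z *\<^sub>R 1 + Im z *\<^sub>R \<i>)" by simp
    also have "\<dots> = Re z * h 1 + Im z * h \<i>"
      using linear.hyps by (simp add: linear_add linear_scale bounded_linear.linear)
    finally show ?thesis .
  qed
  define P where "P = (\<lambda>z. ((z + of_real (r^2) / z)/2) * of_real (h 1) + ((z - of_real (r^2)/z)/(2*\<i>)) * of_real (h \<i>))"
  have "P holomorphic_on -{0}" unfolding P_def by (intro holomorphic_intros) auto
  moreover have "P z = of_real (h z)" if "z \<in> sphere 0 r" for z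
  proof -
    have nz: "z \<noteq> 0" using that assms(2) by auto
    have "cnj z = of_real (r^2) / z"
      using that nz by (simp add: field_simps complex_norm_square[symmetric] flip: of_real_power) 
    then have re: "of_real (Re z) = (z + of_real (r^2) / z)/2" and im: "of_real (Im z) = (z - of_real (r^2)/z)/(2*\<i>)"
    proof -
      have "of_real (Re z) = (z + cnj z)/2" using complex_add_cnj[of z] by simp
      moreover have "of_real (Im z) = (z - cnj z)/(2*\<i>)" using complex_diff_cnj[of z] by (simp add: field_simps)
      ultimately show "of_real (Re z) = (z + of_real (r^2) / z)/2" "of_real (Im z) = (z - of_real (r^2)/z)/(2*\<i>)"
        using \<open>cnj z = _\<close> by simp_all
    qed
    show ?thesis unfolding P_def hz[of z] re[symmetric] im[symmetric] by simp
  qed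
  ultimately show ?case by blast
next
  case (const c)
  then show ?case by (intro exI[of _ "\<lambda>_. of_real c"]) auto
next
  case (add f g)
  then obtain P Q where "P holomorphic_on -{0}" "\<forall>z\<in>sphere 0 r. P z = of_real (f z)"
     "Q holomorphic_on -{0}" "\<forall>z\<in>sphere 0 r. Q z = of_real (g z)" by blast
  then show ?case by (intro exI[of _ "\<lambda>z. P z + Q z"]) (auto intro: holomorphic_intros)
next
  case (mult f g)
  then obtain P Q where "P holomorphic_on -{0}" "\<forall>z\<in>sphere 0 r. P z = of_real (f z)"
     "Q holomorphic_on -{0}" "\<forall>z\<in>sphere 0 r. Q z = of_real (g z)" by blast
  then show ?case by (intro exI[of _ "\<lambda>z. P z * Q z"]) (auto intro: holomorphic_intros)
qed

lemma pf_laurent: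
  fixes g :: "complex \<Rightarrow> complex"
  assumes "polynomial_function g" "r > 0"
  shows "\<exists>P. P holomorphic_on -{0} \<and> (\<forall>z\<in>sphere 0 r. P z = g z)"
proof -
  have r1: "real_polynomial_function (Re \<circ> g)" 
    using assms(1) bounded_linear_Re unfolding polynomial_function_def by blast
  have r2: "real_polynomial_function (Im \<circ> g)"
    using assms(1) bounded_linear_Im unfolding polynomial_function_def by blast
  obtain P where P: "P holomorphic_on -{0}" "\<forall>z\<in>sphere 0 r. P z = of_real ((Re \<circ> g) z)"
    using rpf_laurent[OF r1 assms(2)] by blast
  obtain Q where Q: "Q holomorphic_on -{0}" "\<forall>z\<in>sphere 0 r. Q z = of_real ((Im \<circ> g) z)"
    using rpf_laurent[OF r2 assms(2)] by blast
  show ?thesis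
  proof (rule exI[of _ "\<lambda>z. P z + \<i> * Q z"], intro conjI ballI)
    show "(\<lambda>z. P z + \<i> * Q z) holomorphic_on -{0}" using P(1) Q(1) by (intro holomorphic_intros)
  next
    fix z :: complex assume "z \<in> sphere 0 r"
    then have "P z + \<i> * Q z = of_real (Re (g z)) + \<i> * of_real (Im (g z))" using P(2) Q(2) by simp
    also have "\<dots> = g z" by (rule complex_eq[symmetric])
    finally show "P z + \<i> * Q z = g z" .
  qed
qed

lemma norm_cis_diff: "norm (cis s - cis x) \<le> \<bar>s - x\<bar>"
proof -
  have e2: "2 * ((s-x)/2) = s - x" by simp
  have c: "cos (s-x) = 1 - 2 * sin ((s-x)/2)^2" using cos_double_sin[of "(s-x)/2"] unfolding e2 .
  have "(norm (cis s - cis x))^2 = (cos s - cos x)^2 + (sin s - sin x)^2"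
    by (simp add: cmod_def)
  also have "\<dots> = 2 - 2 * cos (s - x)"
    unfolding cos_diff power2_diff using sin_cos_squared_add[of s] sin_cos_squared_add[of x] by argo
  also have "\<dots> = 4 * (sin ((s - x)/2))^2"
    unfolding c by simp
  also have "\<dots> \<le> 4 * ((s-x)/2)^2"
  proof -
    have "sin((s-x)/2)^2 \<le> ((s-x)/2)^2" using abs_sin_x_le_abs_x[of "(s-x)/2"] abs_le_square_iff by blast
    then show ?thesis by linarith
  qed
  also have "\<dots> = \<bar>s - x\<bar>^2" by (simp add: power2_eq_square)
  finally show ?thesis
    using abs_ge_zero power2_le_imp_le by blast
qed

lemma sphere_param:
  assumes "z \<in> sphere 0 r" "r > 0"
  shows "\<exists>s\<in>{0..2*pi}. z = complex_of_real r * cis s"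
proof -
  have z: "z = complex_of_real r * cis (Arg z)"
    using rcis_cmod_Arg[of z] assms by (simp add: rcis_def)
  show ?thesis
  proof (cases "Arg z \<ge> 0")
    case True then show ?thesis using Arg_le_pi[of z] z
      by (intro bexI[of _ "Arg z"]) auto
  next
    case False
    have "cis (Arg z + 2*pi) = cis (Arg z)" by (simp add: cis.ctr)
    then show ?thesis using False mpi_less_Arg[of z] z Arg_le_pi[of z]
      by (intro bexI[of _ "Arg z + 2*pi"]) auto
  qed
qed

lemma circle_cover:
  fixes K :: "complex set" and r e :: real
  assumes r: "r > 0" and cK: "closed K" and Ks: "K \<subseteq> sphere 0 r"
    and neg: "negligible {t\<in>{0..2*pi}. complex_of_real r * cis t \<in> K}" and e: "e > 0"
  shows "\<exists>I::(real \<times> real set) set. \<exists>pt rad. finite I \<and> (\<forall>i\<in>I. pt i \<in> K \<and> rad i > 0)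
           \<and> K \<subseteq> (\<Union>i\<in>I. ball (pt i) (rad i)) \<and> sum rad I < e"
proof -
  define S where "S = {t\<in>{0..2*pi}. complex_of_real r * cis t \<in> K}"
  have "closed ((\<lambda>t. complex_of_real r * cis t) -` K)"
    by (rule continuous_closed_vimage[OF cK]) (simp add: cis_conv_exp continuous_intros)
  moreover have "S = {0..2*pi} \<inter> ((\<lambda>t. complex_of_real r * cis t) -` K)" unfolding S_def by auto
  ultimately have cS: "closed S" by (simp add: closed_Int)
  have "(indicator S has_integral (0::real)) (cbox 0 (2*pi))"
    using neg[unfolded negligible_def, rule_format, of 0 "2*pi"] unfolding S_def .
  then have hi: "\<forall>e>0. \<exists>\<gamma>. gauge \<gamma> \<and> (\<forall>\<D>. \<D> tagged_division_of (cbox 0 (2*pi)) \<and> \<gamma> fine \<D> \<longrightarrow>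
        norm ((\<Sum>(x, k)\<in>\<D>. Henstock_Kurzweil_Integration.content k *\<^sub>R (indicator S x :: real)) - 0) < e)"
    unfolding has_integral .
  have ep: "e/(2*r) > 0" using e r by simp
  from hi[rule_format, OF ep] obtain \<gamma> where g: "gauge \<gamma>" and gD': "\<forall>\<D>. \<D> tagged_division_of (cbox 0 (2*pi)) \<and> \<gamma> fine \<D> \<longrightarrow>
        norm ((\<Sum>(x, k)\<in>\<D>. Henstock_Kurzweil_Integration.content k *\<^sub>R (indicator S x :: real)) - 0) < e/(2*r)"
    by (elim exE conjE)
  have gD: "norm ((\<Sum>(x, k)\<in>\<D>. Henstock_Kurzweil_Integration.content k *\<^sub>R (indicator S x :: real)) - 0) < e/(2*r)"
    if "\<D> tagged_division_of (cbox 0 (2*pi))" "\<gamma> fine \<D>" for \<D>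
    using gD' that by blast
  define \<gamma>' where "\<gamma>' = (\<lambda>x. if x \<in> S then \<gamma> x else \<gamma> x \<inter> -S)"
  have g': "gauge \<gamma>'" using g cS unfolding gauge_def \<gamma>'_def by (auto simp: open_Int open_Compl)
  obtain D where D: "D tagged_division_of (cbox 0 (2*pi))" "\<gamma>' fine D"
    using fine_division_exists[OF g'] by blast
  have sub: "\<gamma>' x \<subseteq> \<gamma> x" for x unfolding \<gamma>'_def by auto
  have "\<forall>(x,k)\<in>D. k \<subseteq> \<gamma> x"
  proof (intro ballI)
    fix p assume p: "p \<in> D"
    obtain x k where pxk: "p = (x,k)" by fastforce
    have "k \<subseteq> \<gamma>' x" using D(2) p unfolding fine_def pxk by blast
    then show "case p of (x,k) \<Rightarrow> k \<subseteq> \<gamma> x" using sub[of x] unfolding pxk by simp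
  qed
  then have "\<gamma> fine D" unfolding fine_def .
  then have Dsum: "norm ((\<Sum>(x, k)\<in>D. Henstock_Kurzweil_Integration.content k *\<^sub>R (indicator S x :: real))) < e/(2*r)"
    using gD D(1) by simp
  have fD: "finite D" using D(1) by blast
  define I where "I = {i\<in>D. fst i \<in> S}"
  define \<eta> where "\<eta> = e / (2 * (real (card D) + 1))"
  have eta: "\<eta> > 0" using e unfolding \<eta>_def by (simp add: add_pos_nonneg)
  define pt where "pt = (\<lambda>i::real \<times> real set. complex_of_real r * cis (fst i))"
  define rad where "rad = (\<lambda>i::real \<times> real set. r * Henstock_Kurzweil_Integration.content (snd i) + \<eta>)"
  have fI: "finite I" using fD unfolding I_def by simp
  have cnt: "Henstock_Kurzweil_Integration.content k \<ge> 0" for k :: "real set" by simp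
  have "(\<Sum>(x, k)\<in>D. Henstock_Kurzweil_Integration.content k *\<^sub>R (indicator S x :: real)) = (\<Sum>i\<in>D. if fst i \<in> S then Henstock_Kurzweil_Integration.content (snd i) else 0)"
    by (intro sum.cong) (auto simp: indicator_def)
  also have "\<dots> = (\<Sum>i\<in>I. Henstock_Kurzweil_Integration.content (snd i))"
    unfolding I_def using fD by (simp add: sum.inter_filter)
  finally have sI: "(\<Sum>i\<in>I. Henstock_Kurzweil_Integration.content (snd i)) < e/(2*r)"
    using Dsum by simp
  have cI: "card I \<le> card D" using fD unfolding I_def by (intro card_mono) auto
  have "sum rad I = r * (\<Sum>i\<in>I. Henstock_Kurzweil_Integration.content (snd i)) + real (card I) * \<eta>"
    unfolding rad_def by (simp add: sum.distrib sum_distrib_left)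
  also have "r * (\<Sum>i\<in>I. Henstock_Kurzweil_Integration.content (snd i)) < e/2"
    using sI r by (simp add: field_simps)
  also have "real (card I) * \<eta> \<le> e/2"
  proof -
    have "real (card I) * \<eta> \<le> real (card D) * \<eta>" using cI eta by (simp add: mult_right_mono)
    also have "\<dots> \<le> e/2" unfolding \<eta>_def using e by (simp add: field_simps)
    finally show ?thesis .
  qed
  finally have sumr: "sum rad I < e" by simp
  have ptK: "pt i \<in> K" if "i \<in> I" for i using that unfolding I_def pt_def S_def by auto
  have radp: "rad i > 0" if "i \<in> I" for i unfolding rad_def using r eta 
    by (simp add: add_nonneg_pos)
  have cov: "K \<subseteq> (\<Union>i\<in>I. ball (pt i) (rad i))"
  proof
    fix z assume zK: "z \<in> K"
    then obtain s where s: "s \<in> {0..2*pi}" "z = complex_of_real r * cis s"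
    proof -
      have "z \<in> sphere 0 r" using Ks zK by blast
      then show ?thesis using sphere_param[of z r] r that by blast
    qed
    then have sS: "s \<in> S" unfolding S_def using zK by auto
    have "s \<in> \<Union>{k. \<exists>x. (x, k) \<in> D}" using D(1) s(1) by (simp add: tagged_division_ofD(6))
    then obtain x k where xk: "(x, k) \<in> D" "s \<in> k" by blast
    have "k \<subseteq> \<gamma>' x" using D(2) xk(1) unfolding fine_def by blast
    then have xS: "x \<in> S" using sS xk(2) unfolding \<gamma>'_def by (auto split: if_splits)
    then have iI: "(x, k) \<in> I" unfolding I_def using xk by simp
    obtain u v where k: "k = cbox u v" using tagged_division_ofD(4)[OF D(1) xk(1)] by blast
    have xk2: "x \<in> k" using tagged_division_ofD(2)[OF D(1) xk(1)] .
    then have uv: "u \<le> v" "x \<in> {u..v}" "s \<in> {u..v}" using k xk(2) by auto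
    have ck: "Henstock_Kurzweil_Integration.content k = v - u" using k uv by (simp add: content_real)
    have "dist z (pt (x,k)) = r * norm (cis s - cis x)"
      unfolding s(2) pt_def dist_norm using r
      by (simp add: right_diff_distrib[symmetric] norm_mult)
    also have "\<dots> \<le> r * \<bar>s - x\<bar>" using norm_cis_diff r by (simp add: mult_left_mono)
    also have "\<dots> \<le> r * Henstock_Kurzweil_Integration.content k" using uv ck r by (intro mult_left_mono) auto
    also have "\<dots> < rad (x,k)" unfolding rad_def using eta by simp
    finally show "z \<in> (\<Union>i\<in>I. ball (pt i) (rad i))" using iI by (auto simp: dist_commute)
  qed
  show ?thesis using fI ptK radp cov sumr by blast
qed

lemma qb_nz: fixes c :: real and w :: complex assumes "c > 0" "Re w \<ge> 0"
  shows "complex_of_real c + w \<noteq> 0"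
proof
  assume "complex_of_real c + w = 0"
  then have "Re (complex_of_real c + w) = 0" by simp
  then show False using assms by simp
qed

lemma qb_norm_ge: fixes c :: real and w :: complex assumes "c > 0" "Re w \<ge> 0"
  shows "norm w \<le> norm (complex_of_real c + w)"
proof -
  have "(norm w)^2 = (Re w)^2 + (Im w)^2" by (simp add: cmod_power2)
  also have "\<dots> \<le> (c + Re w)^2 + (Im w)^2" using assms by (simp add: power_mono)
  also have "\<dots> = (norm (complex_of_real c + w))^2" by (simp add: cmod_power2)
  finally show ?thesis using power2_le_imp_le norm_ge_zero by blast
qed

lemma qb_re: fixes c :: real and w :: complex assumes "c > 0" "Re w \<ge> 0"
  shows "Re (complex_of_real c / (complex_of_real c + w)) = c * (c + Re w) / (norm (complex_of_real c + w))^2"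
proof -
  have "Re (complex_of_real c / (complex_of_real c + w)) = (Re (complex_of_real c) * Re (complex_of_real c + w) + Im (complex_of_real c) * Im (complex_of_real c + w)) / (cmod (complex_of_real c + w))^2"
    by (rule Re_divide')
  also have "\<dots> = c * (c + Re w) / (norm (complex_of_real c + w))^2"
    by (simp only: Re_complex_of_real Im_complex_of_real plus_complex.sel mult_zero_left add_0_right)
  finally show ?thesis .
qed

lemma qb_re_nonneg: fixes c :: real and w :: complex assumes "c > 0" "Re w \<ge> 0"
  shows "Re (complex_of_real c / (complex_of_real c + w)) \<ge> 0"
  unfolding qb_re[OF assms] using assms by simp

lemma qb_norm: fixes c :: real and w :: complex assumes "c > 0" "Re w \<ge> 0"
  shows "norm (complex_of_real c / (complex_of_real c + w)) * norm w \<le> c"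
proof -
  have nz: "norm (complex_of_real c + w) > 0" using qb_nz[OF assms] by simp
  have "norm (complex_of_real c / (complex_of_real c + w)) * norm w = c * norm w / norm (complex_of_real c + w)"
    using assms by (simp add: norm_divide)
  also have "\<dots> \<le> c" using qb_norm_ge[OF assms] nz assms by (simp add: divide_le_eq)
  finally show ?thesis .
qed

lemma qb_norm1: fixes c :: real and w :: complex assumes "c > 0" "Re w \<ge> 0"
  shows "norm (complex_of_real c / (complex_of_real c + w)) \<le> 1"
proof -
  have "c \<le> Re (complex_of_real c + w)" using assms by simp
  also have "\<dots> \<le> norm (complex_of_real c + w)" by (rule complex_Re_le_cmod)
  finally show ?thesis using assms by (simp add: norm_divide divide_le_eq)
qed

lemma qb_quarter: fixes c :: real and w :: complex assumes "c > 0" "Re w \<ge> 0" "norm w < c"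
  shows "Re (complex_of_real c / (complex_of_real c + w)) \<ge> 1/4"
proof -
  have n: "norm (complex_of_real c + w) \<le> 2 * c"
    using norm_triangle_ineq[of "complex_of_real c" w] assms by simp
  have np: "norm (complex_of_real c + w) > 0" using qb_nz[OF assms(1,2)] by simp
  have "(norm (complex_of_real c + w))^2 \<le> (2*c)^2" using n np by (intro power_mono) auto
  then have "(norm (complex_of_real c + w))^2 \<le> 4 * (c * (c + Re w))"
  proof -
    have "c*c \<le> c*(c+Re w)" using assms by (simp add: mult_left_mono)
    then show ?thesis using \<open>(norm (complex_of_real c + w))^2 \<le> (2*c)^2\<close> by (simp add: power2_eq_square)
  qed
  then show ?thesis unfolding qb_re[OF assms(1,2)] using np
    by (simp add: field_simps)
qed

lemma outer_w:
  fixes p z :: complex assumes "norm p = 1" "norm z \<le> 1"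
  shows "Re (1 - z/p) \<ge> 0" "norm (1 - z/p) = norm (z - p)"
proof -
  have p0: "p \<noteq> 0" using assms by auto
  have "Re (z/p) \<le> norm (z/p)" by (rule complex_Re_le_cmod)
  also have "\<dots> \<le> 1" using assms by (simp add: norm_divide)
  finally show "Re (1 - z/p) \<ge> 0" by simp
  have "1 - z/p = (p - z)/p" using p0 by (simp add: field_simps)
  then show "norm (1 - z/p) = norm (z - p)" using assms by (simp add: norm_divide norm_minus_commute)
qed

lemma inner_w:
  fixes p z :: complex assumes "norm p = r0" "r0 \<le> norm z" "norm z \<le> 1" "r0 > 0"
  shows "Re (1 - p/z) \<ge> 0" "norm (z - p) \<le> norm (1 - p/z)" "norm (1 - p/z) \<le> norm (z - p) / r0"
proof -
  have z0: "z \<noteq> 0" using assms by auto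
  have "Re (p/z) \<le> norm (p/z)" by (rule complex_Re_le_cmod)
  also have "\<dots> \<le> 1" using assms z0 by (simp add: norm_divide divide_le_eq)
  finally show "Re (1 - p/z) \<ge> 0" by simp
  have e: "1 - p/z = (z - p)/z" using z0 by (simp add: field_simps)
  have nz: "norm z > 0" using z0 by simp
  show "norm (z - p) \<le> norm (1 - p/z)" unfolding e using assms nz
    by (simp add: norm_divide le_divide_eq mult_left_le)
  show "norm (1 - p/z) \<le> norm (z - p) / r0" unfolding e using assms nz
    by (simp add: norm_divide frac_le)
qed

lemma peak:
  fixes K C :: "complex set" and r0 \<epsilon> :: real
  assumes r0: "0 < r0" "r0 < 1" and cK: "compact K" and Ks: "K \<subseteq> sphere 0 1 \<union> sphere 0 r0"
    and n1: "negligible {t\<in>{0..2*pi}. complex_of_real 1 * cis t \<in> K}"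
    and n2: "negligible {t\<in>{0..2*pi}. complex_of_real r0 * cis t \<in> K}"
    and cC: "closed C" and KC: "K \<inter> C = {}" and eps: "\<epsilon> > 0"
  shows "\<exists>g. continuous_on {z. r0 \<le> cmod z \<and> cmod z \<le> 1} g \<and> g holomorphic_on {z. r0 < cmod z \<and> cmod z < 1}
     \<and> (\<forall>z\<in>{z. r0 \<le> cmod z \<and> cmod z \<le> 1}. norm (g z) \<le> 1) \<and> (\<forall>z\<in>K. norm (g z - 1) < \<epsilon>)
     \<and> (\<forall>z\<in>C. r0 \<le> cmod z \<and> cmod z \<le> 1 \<longrightarrow> norm (g z) < \<epsilon>)"
proof -
  define Ac where "Ac = {z. r0 \<le> cmod z \<and> cmod z \<le> 1}"
  define Ao where "Ao = {z. r0 < cmod z \<and> cmod z < 1}"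
  have AoAc: "Ao \<subseteq> Ac" unfolding Ao_def Ac_def by auto
  obtain \<delta> where dpos: "\<delta> > 0" and dsep: "\<And>x y. x \<in> K \<Longrightarrow> y \<in> C \<Longrightarrow> \<delta> \<le> dist x y"
    using separate_compact_closed[OF cK cC KC] by blast
  define LAM where "LAM = 4 / \<epsilon>"
  have lpos: "LAM > 0" unfolding LAM_def using eps by simp
  define \<tau> where "\<tau> = \<epsilon> * \<delta> / (2 * LAM)"
  have tpos: "\<tau> > 0" unfolding \<tau>_def using eps dpos lpos by simp
  define K1 where "K1 = K \<inter> sphere 0 1"
  define K2 where "K2 = K \<inter> sphere 0 r0"
  have cK1: "closed K1" unfolding K1_def using cK by (simp add: closed_Int compact_imp_closed)
  have cK2: "closed K2" unfolding K2_def using cK by (simp add: closed_Int compact_imp_closed)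
  have nK1: "negligible {t\<in>{0..2*pi}. complex_of_real 1 * cis t \<in> K1}"
    by (rule negligible_subset[OF n1]) (auto simp: K1_def)
  have nK2: "negligible {t\<in>{0..2*pi}. complex_of_real r0 * cis t \<in> K2}"
    by (rule negligible_subset[OF n2]) (auto simp: K2_def)
  have "\<exists>I::(real \<times> real set) set. \<exists>pt rad. finite I \<and> (\<forall>i\<in>I. pt i \<in> K1 \<and> rad i > 0)
           \<and> K1 \<subseteq> (\<Union>i\<in>I. ball (pt i) (rad i)) \<and> sum rad I < \<tau>"
    by (rule circle_cover[of 1 K1 \<tau>]) (use cK1 nK1 tpos in \<open>auto simp: K1_def\<close>)
  then obtain I1 :: "(real \<times> real set) set" and pt1 rad1 where I1: "finite I1" "\<forall>i\<in>I1. pt1 i \<in> K1 \<and> rad1 i > 0"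
     "K1 \<subseteq> (\<Union>i\<in>I1. ball (pt1 i) (rad1 i))" "sum rad1 I1 < \<tau>"
    by (elim exE conjE)
  have "\<exists>I::(real \<times> real set) set. \<exists>pt rad. finite I \<and> (\<forall>i\<in>I. pt i \<in> K2 \<and> rad i > 0)
           \<and> K2 \<subseteq> (\<Union>i\<in>I. ball (pt i) (rad i)) \<and> sum rad I < r0 * \<tau>"
    by (rule circle_cover[of r0 K2 "r0 * \<tau>"]) (use cK2 nK2 tpos r0 in \<open>auto simp: K2_def\<close>)
  then obtain I2 :: "(real \<times> real set) set" and pt2 rad2 where I2: "finite I2" "\<forall>i\<in>I2. pt2 i \<in> K2 \<and> rad2 i > 0"
     "K2 \<subseteq> (\<Union>i\<in>I2. ball (pt2 i) (rad2 i))" "sum rad2 I2 < r0 * \<tau>"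
    by (elim exE conjE)
  define c2 where "c2 = (\<lambda>i. rad2 i / r0)"
  define q1 where "q1 = (\<lambda>i z. complex_of_real (rad1 i) / (complex_of_real (rad1 i) + (1 - z / pt1 i)))"
  define q2 where "q2 = (\<lambda>i z. complex_of_real (c2 i) / (complex_of_real (c2 i) + (1 - pt2 i / z)))"
  define \<phi> where "\<phi> = (\<lambda>z. complex_of_real LAM * ((\<Sum>i\<in>I1. q1 i z) + (\<Sum>i\<in>I2. q2 i z)))"
  define g where "g = (\<lambda>z. \<phi> z / (1 + \<phi> z))"
  have p1n: "norm (pt1 i) = 1" if "i \<in> I1" for i using I1(2)[rule_format, OF that] unfolding K1_def by auto
  have p2n: "norm (pt2 i) = r0" if "i \<in> I2" for i using I2(2)[rule_format, OF that] unfolding K2_def by auto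
  have c2p: "c2 i > 0" if "i \<in> I2" for i using I2(2)[rule_format, OF that] r0 unfolding c2_def by simp
  have w1: "Re (1 - z / pt1 i) \<ge> 0" "norm (1 - z / pt1 i) = norm (z - pt1 i)" if "i \<in> I1" "z \<in> Ac" for i z
    using outer_w[OF p1n[OF that(1)]] that(2) unfolding Ac_def by auto
  have w2: "Re (1 - pt2 i / z) \<ge> 0" "norm (z - pt2 i) \<le> norm (1 - pt2 i / z)" "norm (1 - pt2 i / z) \<le> norm (z - pt2 i) / r0"
    if "i \<in> I2" "z \<in> Ac" for i z
    using inner_w[OF p2n[OF that(1)]] that(2) r0 unfolding Ac_def by auto
  have z0: "z \<noteq> 0" if "z \<in> Ac" for z using that r0 unfolding Ac_def by auto
  have q1re: "Re (q1 i z) \<ge> 0" if "i \<in> I1" "z \<in> Ac" for i z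
    unfolding q1_def using qb_re_nonneg[OF _ w1(1)[OF that]] I1(2)[rule_format, OF that(1)] by simp
  have q2re: "Re (q2 i z) \<ge> 0" if "i \<in> I2" "z \<in> Ac" for i z
    unfolding q2_def using qb_re_nonneg[OF c2p[OF that(1)] w2(1)[OF that]] by simp
  have q1nz: "complex_of_real (rad1 i) + (1 - z / pt1 i) \<noteq> 0" if "i \<in> I1" "z \<in> Ac" for i z
    using qb_nz[OF _ w1(1)[OF that]] I1(2)[rule_format, OF that(1)] by simp
  have q2nz: "complex_of_real (c2 i) + (1 - pt2 i / z) \<noteq> 0" if "i \<in> I2" "z \<in> Ac" for i z
    using qb_nz[OF c2p[OF that(1)] w2(1)[OF that]] by simp
  have Rephi: "Re (\<phi> z) = LAM * ((\<Sum>i\<in>I1. Re (q1 i z)) + (\<Sum>i\<in>I2. Re (q2 i z)))" for z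
    unfolding \<phi>_def by (simp add: Re_sum)
  have Re0: "Re (\<phi> z) \<ge> 0" if "z \<in> Ac" for z
    unfolding Rephi using lpos q1re q2re that by (intro mult_nonneg_nonneg add_nonneg_nonneg sum_nonneg) auto
  have onephi: "1 + \<phi> z \<noteq> 0" if "z \<in> Ac" for z
  proof
    assume "1 + \<phi> z = 0"
    then have "Re (1 + \<phi> z) = 0" by simp
    then show False using Re0[OF that] by simp
  qed
  have n1phi: "norm (1 + \<phi> z) \<ge> 1 + Re (\<phi> z)" for z
    using complex_Re_le_cmod[of "1 + \<phi> z"] by simp
  have cq1: "continuous_on Ac (q1 i)" if "i \<in> I1" for i
    unfolding q1_def using q1nz[OF that] p1n[OF that]
    by (intro continuous_intros) auto
  have cq2: "continuous_on Ac (q2 i)" if "i \<in> I2" for i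
    unfolding q2_def using q2nz[OF that] z0
    by (intro continuous_intros) auto
  have hq1: "q1 i holomorphic_on Ao" if "i \<in> I1" for i
    unfolding q1_def using q1nz[OF that] p1n[OF that] AoAc
    by (intro holomorphic_intros) auto
  have hq2: "q2 i holomorphic_on Ao" if "i \<in> I2" for i
    unfolding q2_def using q2nz[OF that] z0 AoAc
    by (intro holomorphic_intros) auto
  have cphi: "continuous_on Ac \<phi>" unfolding \<phi>_def
    by (intro continuous_intros continuous_on_sum cq1 cq2)
  have hphi: "\<phi> holomorphic_on Ao" unfolding \<phi>_def
    by (intro holomorphic_intros holomorphic_on_sum hq1 hq2)
  have cont: "continuous_on Ac g" unfolding g_def
    using onephi by (intro continuous_intros cphi) auto
  have hol: "g holomorphic_on Ao" unfolding g_def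
    using onephi AoAc by (intro holomorphic_intros hphi) auto
  have gle1: "norm (g z) \<le> 1" if "z \<in> Ac" for z
  proof -
    have "norm (\<phi> z) \<le> norm (complex_of_real 1 + \<phi> z)" by (rule qb_norm_ge) (use Re0[OF that] in auto)
    then show ?thesis unfolding g_def using onephi[OF that] by (simp add: norm_divide divide_le_eq)
  qed
  have g1: "norm (g z - 1) = 1 / norm (1 + \<phi> z)" if "z \<in> Ac" for z
  proof -
    have "g z - 1 = - 1 / (1 + \<phi> z)" unfolding g_def using onephi[OF that] by (simp add: field_simps)
    then show ?thesis by (simp add: norm_divide)
  qed
  have KAc: "K \<subseteq> Ac" using Ks r0 unfolding Ac_def by auto
  have ReK: "Re (\<phi> z) \<ge> LAM / 4" if zK: "z \<in> K" for z
  proof -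
    have zA: "z \<in> Ac" using KAc zK by blast
    have s1: "(\<Sum>i\<in>I1. Re (q1 i z)) \<ge> 0" using q1re zA by (intro sum_nonneg) auto
    have s2: "(\<Sum>i\<in>I2. Re (q2 i z)) \<ge> 0" using q2re zA by (intro sum_nonneg) auto
    have "(\<Sum>i\<in>I1. Re (q1 i z)) + (\<Sum>i\<in>I2. Re (q2 i z)) \<ge> 1/4"
    proof (cases "z \<in> sphere 0 1")
      case True
      then have "z \<in> K1" unfolding K1_def using zK by blast
      then obtain i where i: "i \<in> I1" "z \<in> ball (pt1 i) (rad1 i)" using I1(3) by blast
      have "norm (1 - z / pt1 i) < rad1 i" using w1(2)[OF i(1) zA] i(2) by (simp add: dist_norm norm_minus_commute)
      then have "Re (q1 i z) \<ge> 1/4" unfolding q1_def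
        using qb_quarter[OF _ w1(1)[OF i(1) zA]] I1(2)[rule_format, OF i(1)] by simp
      moreover have "Re (q1 i z) \<le> (\<Sum>i\<in>I1. Re (q1 i z))"
        using q1re zA i(1) I1(1) by (intro member_le_sum) auto
      ultimately show ?thesis using s2 by linarith
    next
      case False
      then have "z \<in> K2" unfolding K2_def using zK Ks by blast
      then obtain i where i: "i \<in> I2" "z \<in> ball (pt2 i) (rad2 i)" using I2(3) by blast
      have "norm (1 - pt2 i / z) \<le> norm (z - pt2 i) / r0" by (rule w2(3)[OF i(1) zA])
      also have "\<dots> < rad2 i / r0" using i(2) r0 by (simp add: dist_norm norm_minus_commute divide_strict_right_mono)
      finally have "norm (1 - pt2 i / z) < c2 i" unfolding c2_def .
      then have "Re (q2 i z) \<ge> 1/4" unfolding q2_def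
        using qb_quarter[OF c2p[OF i(1)] w2(1)[OF i(1) zA]] by simp
      moreover have "Re (q2 i z) \<le> (\<Sum>i\<in>I2. Re (q2 i z))"
        using q2re zA i(1) I2(1) by (intro member_le_sum) auto
      ultimately show ?thesis using s1 by linarith
    qed
    then show ?thesis unfolding Rephi using lpos by (simp add: mult_left_mono)
  qed
  have gK: "norm (g z - 1) < \<epsilon>" if zK: "z \<in> K" for z
  proof -
    have zA: "z \<in> Ac" using KAc zK by blast
    have "1 + LAM/4 \<le> norm (1 + \<phi> z)" using ReK[OF zK] n1phi[of z] by linarith
    moreover have "1 + LAM/4 = 1 + 1/\<epsilon>" unfolding LAM_def by simp
    ultimately have "1/\<epsilon> < norm (1 + \<phi> z)" by linarith
    then show ?thesis unfolding g1[OF zA] using eps by (simp add: divide_less_eq field_simps)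
  qed
  have gC: "norm (g z) < \<epsilon>" if zC: "z \<in> C" and zA: "z \<in> Ac" for z
  proof -
    have b1: "norm (q1 i z) \<le> rad1 i / \<delta>" if i: "i \<in> I1" for i
    proof -
      have "\<delta> \<le> dist (pt1 i) z" using dsep[of "pt1 i" z] I1(2)[rule_format, OF i] zC unfolding K1_def by blast
      then have dl: "\<delta> \<le> norm (1 - z / pt1 i)" using w1(2)[OF i zA] by (simp add: dist_norm norm_minus_commute)
      have "norm (q1 i z) * norm (1 - z / pt1 i) \<le> rad1 i" unfolding q1_def
        using qb_norm[OF _ w1(1)[OF i zA]] I1(2)[rule_format, OF i] by simp
      then have "norm (q1 i z) * \<delta> \<le> rad1 i" using dl by (meson mult_left_mono norm_ge_zero order_trans)
      then show ?thesis using dpos by (simp add: le_divide_eq)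
    qed
    have b2: "norm (q2 i z) \<le> c2 i / \<delta>" if i: "i \<in> I2" for i
    proof -
      have "\<delta> \<le> dist (pt2 i) z" using dsep[of "pt2 i" z] I2(2)[rule_format, OF i] zC unfolding K2_def by blast
      then have dl: "\<delta> \<le> norm (1 - pt2 i / z)" using w2(2)[OF i zA] by (simp add: dist_norm norm_minus_commute)
      have "norm (q2 i z) * norm (1 - pt2 i / z) \<le> c2 i" unfolding q2_def
        using qb_norm[OF c2p[OF i] w2(1)[OF i zA]] by simp
      then have "norm (q2 i z) * \<delta> \<le> c2 i" using dl by (meson mult_left_mono norm_ge_zero order_trans)
      then show ?thesis using dpos by (simp add: le_divide_eq)
    qed
    have "norm (\<phi> z) \<le> LAM * (norm (\<Sum>i\<in>I1. q1 i z) + norm (\<Sum>i\<in>I2. q2 i z))"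
      unfolding \<phi>_def using lpos by (simp add: norm_mult norm_triangle_ineq mult_left_mono)
    also have "\<dots> \<le> LAM * ((\<Sum>i\<in>I1. rad1 i / \<delta>) + (\<Sum>i\<in>I2. c2 i / \<delta>))"
    proof -
      have "norm (\<Sum>i\<in>I1. q1 i z) \<le> (\<Sum>i\<in>I1. rad1 i / \<delta>)"
        using norm_sum[of "\<lambda>i. q1 i z" I1] sum_mono[of I1 "\<lambda>i. norm (q1 i z)" "\<lambda>i. rad1 i / \<delta>"] b1 by simp
      moreover have "norm (\<Sum>i\<in>I2. q2 i z) \<le> (\<Sum>i\<in>I2. c2 i / \<delta>)"
        using norm_sum[of "\<lambda>i. q2 i z" I2] sum_mono[of I2 "\<lambda>i. norm (q2 i z)" "\<lambda>i. c2 i / \<delta>"] b2 by simp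
      ultimately show ?thesis using lpos by (intro mult_left_mono) auto
    qed
    also have "\<dots> = LAM * (sum rad1 I1 / \<delta> + sum rad2 I2 / (r0 * \<delta>))"
      unfolding c2_def by (simp add: sum_divide_distrib[symmetric])
    also have "\<dots> < LAM * (\<tau> / \<delta> + (r0 * \<tau>) / (r0 * \<delta>))"
      using I1(4) I2(4) lpos dpos r0 by (intro mult_strict_left_mono add_strict_mono divide_strict_right_mono) auto
    also have "\<dots> = \<epsilon>" unfolding \<tau>_def using lpos dpos r0 by (simp add: field_simps)
    finally have "norm (\<phi> z) < \<epsilon>" .
    moreover have "norm (g z) \<le> norm (\<phi> z)"
    proof -
      have "1 \<le> norm (1 + \<phi> z)" using n1phi[of z] Re0[OF zA] by linarith
      then show ?thesis unfolding g_def by (simp add: norm_divide divide_le_eq mult_le_cancel_left1 order_trans[OF _ mult_left_mono])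
    qed
    ultimately show ?thesis by linarith
  qed
  show ?thesis
    apply (rule exI[of _ g])
    using cont hol gle1 gK gC unfolding Ac_def Ao_def by auto
qed

lemma compact_Ac: "compact {z::complex. r0 \<le> cmod z \<and> cmod z \<le> 1}"
proof -
  have "{z::complex. r0 \<le> cmod z \<and> cmod z \<le> 1} = cball 0 1 - ball 0 r0" by auto
  then show ?thesis by (simp add: compact_diff)
qed

lemma bound_on_Ac:
  fixes P :: "complex \<Rightarrow> complex"
  assumes "continuous_on {z. r0 \<le> cmod z \<and> cmod z \<le> 1} P"
  shows "\<exists>H>0. \<forall>z\<in>{z. r0 \<le> cmod z \<and> cmod z \<le> 1}. norm (P z) \<le> H"
proof -
  have "bounded (P ` {z. r0 \<le> cmod z \<and> cmod z \<le> 1})"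
    by (rule compact_imp_bounded[OF compact_continuous_image[OF assms compact_Ac]])
  then obtain a where a: "\<forall>x\<in>P ` {z. r0 \<le> cmod z \<and> cmod z \<le> 1}. norm x \<le> a" unfolding bounded_iff by blast
  show ?thesis
    by (rule exI[of _ "\<bar>a\<bar> + 1"]) (use a in force)
qed

lemma norm3: fixes a b c :: complex shows "norm (a + b + c) \<le> norm a + norm b + norm c"
  using norm_triangle_ineq[of "a+b" c] norm_triangle_ineq[of a b] by linarith

lemma approx:
  fixes E :: "complex set" and f :: "complex \<Rightarrow> complex" and r0 \<epsilon> :: real
  assumes r0: "0 < r0" "r0 < 1" and cE: "compact E" and Es: "E \<subseteq> sphere 0 1 \<union> sphere 0 r0"
    and n1: "negligible {t\<in>{0..2*pi}. complex_of_real 1 * cis t \<in> E}"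
    and n2: "negligible {t\<in>{0..2*pi}. complex_of_real r0 * cis t \<in> E}"
    and cf: "continuous_on E f" and eps: "\<epsilon> > 0"
  shows "\<exists>h. continuous_on {z. r0 \<le> cmod z \<and> cmod z \<le> 1} h \<and> h holomorphic_on {z. r0 < cmod z \<and> cmod z < 1}
     \<and> (\<forall>z\<in>E. norm (h z - f z) < \<epsilon>)"
proof -
  define Ac where "Ac = {z::complex. r0 \<le> cmod z \<and> cmod z \<le> 1}"
  define Ao where "Ao = {z::complex. r0 < cmod z \<and> cmod z < 1}"
  have AoAc: "Ao \<subseteq> Ac" unfolding Ao_def Ac_def by auto
  have Ac0: "Ac \<subseteq> -{0}" unfolding Ac_def using r0 by auto
  obtain p where p: "polynomial_function p" "\<forall>x\<in>E. norm (f x - p x) < \<epsilon>/3"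
    using Stone_Weierstrass_polynomial_function[OF cE cf, of "\<epsilon>/3"] eps by auto
  obtain P1 where P1: "P1 holomorphic_on -{0}" "\<forall>z\<in>sphere 0 1. P1 z = p z"
    using pf_laurent[OF p(1), of 1] by auto
  obtain P2 where P2: "P2 holomorphic_on -{0}" "\<forall>z\<in>sphere 0 r0. P2 z = p z"
    using pf_laurent[OF p(1), of r0] r0 by auto
  have cP1: "continuous_on Ac P1"
    using holomorphic_on_imp_continuous_on[OF P1(1)] Ac0 continuous_on_subset by blast
  have cP2: "continuous_on Ac P2"
    using holomorphic_on_imp_continuous_on[OF P2(1)] Ac0 continuous_on_subset by blast
  obtain H1 where H1: "H1 > 0" "\<forall>z\<in>Ac. norm (P1 z) \<le> H1" using bound_on_Ac[OF cP1[unfolded Ac_def]] unfolding Ac_def by blast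
  obtain H2 where H2: "H2 > 0" "\<forall>z\<in>Ac. norm (P2 z) \<le> H2" using bound_on_Ac[OF cP2[unfolded Ac_def]] unfolding Ac_def by blast
  define H where "H = H1 + H2"
  have Hp: "H > 0" unfolding H_def using H1 H2 by simp
  have PH: "norm (P1 z) \<le> H" "norm (P2 z) \<le> H" if "z \<in> Ac" for z
    using H1 H2 that unfolding H_def by force+
  define \<eta> where "\<eta> = \<epsilon> / (3 * H)"
  have etap: "\<eta> > 0" unfolding \<eta>_def using eps Hp by simp
  have Heta: "H * \<eta> = \<epsilon>/3" unfolding \<eta>_def using Hp by simp
  have cE1: "compact (E \<inter> sphere 0 1)" using cE by (simp add: compact_Int_closed)
  have cE2: "compact (E \<inter> sphere 0 r0)" using cE by (simp add: compact_Int_closed)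
  have "\<exists>g. continuous_on Ac g \<and> g holomorphic_on Ao
     \<and> (\<forall>z\<in>Ac. norm (g z) \<le> 1) \<and> (\<forall>z\<in>E \<inter> sphere 0 1. norm (g z - 1) < \<eta>)
     \<and> (\<forall>z\<in>sphere 0 r0. r0 \<le> cmod z \<and> cmod z \<le> 1 \<longrightarrow> norm (g z) < \<eta>)"
    unfolding Ac_def Ao_def
    by (rule peak[OF r0 cE1]) (use Es r0 etap in \<open>auto intro: negligible_subset[OF n1] negligible_subset[OF n2]\<close>)
  then obtain g1 where g1: "continuous_on Ac g1" "g1 holomorphic_on Ao" "\<forall>z\<in>Ac. norm (g1 z) \<le> 1"
     "\<forall>z\<in>E \<inter> sphere 0 1. norm (g1 z - 1) < \<eta>" "\<forall>z\<in>sphere 0 r0. r0 \<le> cmod z \<and> cmod z \<le> 1 \<longrightarrow> norm (g1 z) < \<eta>"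
    by (elim exE conjE)
  have "\<exists>g. continuous_on Ac g \<and> g holomorphic_on Ao
     \<and> (\<forall>z\<in>Ac. norm (g z) \<le> 1) \<and> (\<forall>z\<in>E \<inter> sphere 0 r0. norm (g z - 1) < \<eta>)
     \<and> (\<forall>z\<in>sphere 0 1. r0 \<le> cmod z \<and> cmod z \<le> 1 \<longrightarrow> norm (g z) < \<eta>)"
    unfolding Ac_def Ao_def
    by (rule peak[OF r0 cE2]) (use Es r0 etap in \<open>auto intro: negligible_subset[OF n1] negligible_subset[OF n2]\<close>)
  then obtain g2 where g2: "continuous_on Ac g2" "g2 holomorphic_on Ao" "\<forall>z\<in>Ac. norm (g2 z) \<le> 1"
     "\<forall>z\<in>E \<inter> sphere 0 r0. norm (g2 z - 1) < \<eta>" "\<forall>z\<in>sphere 0 1. r0 \<le> cmod z \<and> cmod z \<le> 1 \<longrightarrow> norm (g2 z) < \<eta>"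
    by (elim exE conjE)
  define h where "h = (\<lambda>z. P1 z * g1 z + P2 z * g2 z)"
  have ch: "continuous_on Ac h" unfolding h_def using cP1 cP2 g1(1) g2(1) by (intro continuous_intros)
  have hh: "h holomorphic_on Ao" unfolding h_def
    using g1(2) g2(2) holomorphic_on_subset[OF P1(1)] holomorphic_on_subset[OF P2(1)] AoAc Ac0
    by (intro holomorphic_intros) auto
  have key: "norm (h z - f z) < \<epsilon>" if zE: "z \<in> E" for z
  proof -
    have zA: "z \<in> Ac" using zE Es r0 unfolding Ac_def by auto
    have pf: "norm (p z - f z) < \<epsilon>/3" using p(2) zE by (simp add: norm_minus_commute)
    show ?thesis
    proof (cases "z \<in> sphere 0 1")
      case True
      have zr: "z \<notin> sphere 0 r0" using True r0 by auto
      have eq1: "h z - f z = P1 z * (g1 z - 1) + (p z - f z) + P2 z * g2 z"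
        unfolding h_def using P1(2) True by (simp add: algebra_simps)
      have "norm (h z - f z) \<le> norm (P1 z) * norm (g1 z - 1) + norm (p z - f z) + norm (P2 z) * norm (g2 z)"
        unfolding eq1 norm_mult[symmetric] by (rule norm3)
      also have "\<dots> \<le> H * \<eta> + norm (p z - f z) + H * \<eta>"
      proof -
        have "norm (P1 z) * norm (g1 z - 1) \<le> H * \<eta>"
        proof -
          have "norm (g1 z - 1) < \<eta>" using g1(4) True zE by blast
          then show ?thesis using PH(1)[OF zA] Hp by (intro mult_mono) auto
        qed
        moreover have "norm (P2 z) * norm (g2 z) \<le> H * \<eta>"
        proof -
          have "norm (g2 z) < \<eta>" using g2(5) True zA unfolding Ac_def by blast
          then show ?thesis using PH(2)[OF zA] Hp by (intro mult_mono) auto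
        qed
        ultimately show ?thesis by simp
      qed
      also have "\<dots> < \<epsilon>" using pf Heta by simp
      finally show ?thesis .
    next
      case False
      then have zr: "z \<in> sphere 0 r0" using zE Es by auto
      have eq2: "h z - f z = P2 z * (g2 z - 1) + (p z - f z) + P1 z * g1 z"
        unfolding h_def using P2(2) zr by (simp add: algebra_simps)
      have "norm (h z - f z) \<le> norm (P2 z) * norm (g2 z - 1) + norm (p z - f z) + norm (P1 z) * norm (g1 z)"
        unfolding eq2 norm_mult[symmetric] by (rule norm3)
      also have "\<dots> \<le> H * \<eta> + norm (p z - f z) + H * \<eta>"
      proof -
        have "norm (P2 z) * norm (g2 z - 1) \<le> H * \<eta>"
        proof -
          have "norm (g2 z - 1) < \<eta>" using g2(4) zr zE by blast
          then show ?thesis using PH(2)[OF zA] Hp by (intro mult_mono) auto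
        qed
        moreover have "norm (P1 z) * norm (g1 z) \<le> H * \<eta>"
        proof -
          have "norm (g1 z) < \<eta>" using g1(5) zr zA unfolding Ac_def by blast
          then show ?thesis using PH(1)[OF zA] Hp by (intro mult_mono) auto
        qed
        ultimately show ?thesis by simp
      qed
      also have "\<dots> < \<epsilon>" using pf Heta by simp
      finally show ?thesis .
    qed
  qed
  show ?thesis using ch hh key unfolding Ac_def Ao_def by blast
qed

lemma pos_gap:
  fixes u :: "'a::topological_space \<Rightarrow> real"
  assumes "compact S" "continuous_on S u" "\<forall>z\<in>S. u z > 0"
  shows "\<exists>\<delta>>0. \<forall>z\<in>S. \<delta> \<le> u z"
proof (cases "S = {}")
  case True then show ?thesis by (intro exI[of _ 1]) auto
next
  case False
  then obtain x where "x \<in> S" "\<forall>y\<in>S. u x \<le> u y" using continuous_attains_inf[OF assms(1) False assms(2)] by blast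
  then show ?thesis using assms(3) by (intro exI[of _ "u x"]) auto
qed

lemma bapprox:
  fixes E :: "complex set" and f :: "complex \<Rightarrow> complex" and M :: "complex \<Rightarrow> real" and r0 \<epsilon> :: real
  assumes r0: "0 < r0" "r0 < 1" and cE: "compact E" and Es: "E \<subseteq> sphere 0 1 \<union> sphere 0 r0"
    and n1: "negligible {t\<in>{0..2*pi}. complex_of_real 1 * cis t \<in> E}"
    and n2: "negligible {t\<in>{0..2*pi}. complex_of_real r0 * cis t \<in> E}"
    and cf: "continuous_on E f" and cM: "continuous_on (sphere 0 1 \<union> sphere 0 r0) M"
    and Mpos: "\<forall>z\<in>sphere 0 1 \<union> sphere 0 r0. 0 < M z"
    and fM: "\<forall>z\<in>E. norm (f z) < M z" and eps: "\<epsilon> > 0"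
  shows "\<exists>F. continuous_on {z. r0 \<le> cmod z \<and> cmod z \<le> 1} F \<and> F holomorphic_on {z. r0 < cmod z \<and> cmod z < 1}
     \<and> (\<forall>z\<in>E. norm (F z - f z) < \<epsilon>) \<and> (\<forall>z\<in>sphere 0 1 \<union> sphere 0 r0. norm (F z) < M z)"
proof -
  define Ac where "Ac = {z::complex. r0 \<le> cmod z \<and> cmod z \<le> 1}"
  define Ao where "Ao = {z::complex. r0 < cmod z \<and> cmod z < 1}"
  define B where "B = sphere (0::complex) 1 \<union> sphere 0 r0"
  have BAc: "B \<subseteq> Ac" unfolding B_def Ac_def using r0 by auto
  have EB: "E \<subseteq> B" using Es unfolding B_def .
  have cB: "compact B" unfolding B_def by auto
  have cME: "continuous_on E (\<lambda>z. M z - norm (f z))"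
    using continuous_on_subset[OF cM Es] cf by (intro continuous_intros)
  obtain \<delta>0 where d0: "\<delta>0 > 0" "\<forall>z\<in>E. \<delta>0 \<le> M z - norm (f z)"
    using pos_gap[OF cE cME] fM by auto
  obtain m where m: "m > 0" "\<forall>z\<in>B. m \<le> M z"
    using pos_gap[OF cB cM[folded B_def]] Mpos unfolding B_def by auto
  define \<eta> where "\<eta> = min \<epsilon> \<delta>0 / 2"
  have etap: "\<eta> > 0" unfolding \<eta>_def using eps d0 by simp
  obtain h where h: "continuous_on Ac h" "h holomorphic_on Ao" "\<forall>z\<in>E. norm (h z - f z) < \<eta>"
    using approx[OF r0 cE Es n1 n2 cf etap] unfolding Ac_def Ao_def by blast
  obtain H where H: "H > 0" "\<forall>z\<in>Ac. norm (h z) \<le> H"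
    using bound_on_Ac[OF h(1)[unfolded Ac_def]] unfolding Ac_def by blast
  define C where "C = {z\<in>B. M z - \<delta>0/2 \<le> norm (h z)}"
  have "closed (B \<inter> (\<lambda>z. norm (h z) - M z) -` {-\<delta>0/2..})"
    by (rule continuous_closed_preimage) (use continuous_on_subset[OF h(1) BAc] cM[folded B_def] cB in \<open>auto intro!: continuous_intros compact_imp_closed\<close>)
  moreover have "B \<inter> (\<lambda>z. norm (h z) - M z) -` {-\<delta>0/2..} = C" unfolding C_def by auto
  ultimately have cC: "closed C" by simp
  have hE: "norm (h z) < M z - \<delta>0/2" if "z \<in> E" for z
  proof -
    have "norm (h z) \<le> norm (f z) + norm (h z - f z)" using norm_triangle_ineq[of "f z" "h z - f z"] by simp
    moreover have "norm (h z - f z) < \<delta>0/2" using h(3) that unfolding \<eta>_def by force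
    ultimately show ?thesis using d0(2) that by force
  qed
  have EC: "E \<inter> C = {}" unfolding C_def using hE by force
  define \<epsilon>' where "\<epsilon>' = min (\<epsilon> / (2*H)) (m / (2*H))"
  have e'p: "\<epsilon>' > 0" unfolding \<epsilon>'_def using eps m H by simp
  have "\<exists>g. continuous_on Ac g \<and> g holomorphic_on Ao
     \<and> (\<forall>z\<in>Ac. norm (g z) \<le> 1) \<and> (\<forall>z\<in>E. norm (g z - 1) < \<epsilon>')
     \<and> (\<forall>z\<in>C. r0 \<le> cmod z \<and> cmod z \<le> 1 \<longrightarrow> norm (g z) < \<epsilon>')"
    unfolding Ac_def Ao_def by (rule peak[OF r0 cE Es n1 n2 cC EC e'p])
  then obtain g where g: "continuous_on Ac g" "g holomorphic_on Ao" "\<forall>z\<in>Ac. norm (g z) \<le> 1"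
     "\<forall>z\<in>E. norm (g z - 1) < \<epsilon>'" "\<forall>z\<in>C. r0 \<le> cmod z \<and> cmod z \<le> 1 \<longrightarrow> norm (g z) < \<epsilon>'"
    by (elim exE conjE)
  define F where "F = (\<lambda>z. h z * g z)"
  have cF: "continuous_on Ac F" unfolding F_def using h(1) g(1) by (intro continuous_intros)
  have hF: "F holomorphic_on Ao" unfolding F_def using h(2) g(2) by (intro holomorphic_intros)
  have FE: "norm (F z - f z) < \<epsilon>" if zE: "z \<in> E" for z
  proof -
    have zA: "z \<in> Ac" using zE EB BAc by blast
    have "F z - f z = h z * (g z - 1) + (h z - f z)" unfolding F_def by (simp add: algebra_simps)
    then have "norm (F z - f z) \<le> norm (h z) * norm (g z - 1) + norm (h z - f z)"
      by (metis norm_mult norm_triangle_ineq)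
    also have "norm (h z) * norm (g z - 1) \<le> H * \<epsilon>'"
    proof -
      have "norm (g z - 1) < \<epsilon>'" using g(4) zE by blast
      then show ?thesis using H zA by (intro mult_mono) auto
    qed
    also have "H * \<epsilon>' \<le> \<epsilon>/2" unfolding \<epsilon>'_def using H by (simp add: field_simps min_def)
    also have "norm (h z - f z) < \<epsilon>/2" using h(3) zE unfolding \<eta>_def by force
    finally show ?thesis by simp
  qed
  have FB: "norm (F z) < M z" if zB: "z \<in> B" for z
  proof -
    have zA: "z \<in> Ac" using zB BAc by blast
    show ?thesis
    proof (cases "z \<in> C")
      case True
      have "norm (g z) < \<epsilon>'" using g(5) True zA unfolding Ac_def by blast
      then have "norm (F z) \<le> H * \<epsilon>'" unfolding F_def norm_mult using H zA by (intro mult_mono) auto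
      also have "H * \<epsilon>' \<le> m/2" unfolding \<epsilon>'_def using H by (simp add: field_simps min_def)
      also have "\<dots> < M z" using m zB by force
      finally show ?thesis .
    next
      case False
      then have "norm (h z) < M z - \<delta>0/2" unfolding C_def using zB by auto
      moreover have "norm (F z) \<le> norm (h z)" unfolding F_def norm_mult
        using g(3) zA by (simp add: mult_left_le)
      ultimately show ?thesis using d0 by linarith
    qed
  qed
  show ?thesis using cF hF FE FB unfolding Ac_def Ao_def B_def by blast
qed

lemma Ac_topo:
  assumes "0 < r0" "r0 < 1"
  shows "interior {z::complex. r0 \<le> cmod z \<and> cmod z \<le> 1} = {z. r0 < cmod z \<and> cmod z < 1}"
    "closure {z::complex. r0 \<le> cmod z \<and> cmod z \<le> 1} = {z. r0 \<le> cmod z \<and> cmod z \<le> 1}"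
    "frontier {z::complex. r0 \<le> cmod z \<and> cmod z \<le> 1} = sphere 0 1 \<union> sphere 0 r0"
    "bounded {z::complex. r0 \<le> cmod z \<and> cmod z \<le> 1}"
    "open {z::complex. r0 < cmod z \<and> cmod z < 1}"
proof -
  have e1: "{z::complex. r0 \<le> cmod z \<and> cmod z \<le> 1} = cball 0 1 - ball 0 r0" by auto
  have e2: "{z::complex. r0 < cmod z \<and> cmod z < 1} = ball 0 1 - cball 0 r0" by auto
  show i: "interior {z::complex. r0 \<le> cmod z \<and> cmod z \<le> 1} = {z. r0 < cmod z \<and> cmod z < 1}"
    unfolding e1 e2 interior_diff using assms by simp
  show c: "closure {z::complex. r0 \<le> cmod z \<and> cmod z \<le> 1} = {z. r0 \<le> cmod z \<and> cmod z \<le> 1}"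
    unfolding e1 by (simp add: closed_Diff)
  show "frontier {z::complex. r0 \<le> cmod z \<and> cmod z \<le> 1} = sphere 0 1 \<union> sphere 0 r0"
    unfolding frontier_def i c using assms by auto
  show "bounded {z::complex. r0 \<le> cmod z \<and> cmod z \<le> 1}" unfolding e1 by (meson bounded_cball bounded_subset Diff_subset)
  show "open {z::complex. r0 < cmod z \<and> cmod z < 1}" unfolding e2 by (simp add: open_Diff)
qed

lemma max_Ac:
  fixes F :: "complex \<Rightarrow> complex"
  assumes r0: "0 < r0" "r0 < 1" and c: "continuous_on {z. r0 \<le> cmod z \<and> cmod z \<le> 1} F"
    and h: "F holomorphic_on {z. r0 < cmod z \<and> cmod z < 1}"
    and b: "\<forall>z\<in>sphere 0 1 \<union> sphere 0 r0. norm (F z) \<le> b"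
    and z: "z \<in> {z. r0 \<le> cmod z \<and> cmod z \<le> 1}"
  shows "norm (F z) \<le> b"
  by (rule maximum_modulus_frontier[of F]) (use Ac_topo[OF r0] c h b z in auto)

lemma geo_sum: "(\<lambda>k. d / 2^(k+2)) sums (d/2::real)"
proof -
  have "(\<lambda>k. (d/4) * (1/2::real)^k) sums ((d/4) * (1 / (1 - 1/2)))"
    by (rule sums_mult[OF geometric_sums]) simp
  moreover have "(\<lambda>k. (d/4) * (1/2::real)^k) = (\<lambda>k. d / 2^(k+2))"
    by (auto simp: power_add power_one_over field_simps)
  ultimately show ?thesis by simp
qed

lemma eps_lim: "(\<lambda>k. d / 2^(k+4)) \<longlonglongrightarrow> (0::real)"
proof -
  have eq: "(\<lambda>k. d / 2^(k+4)) = (\<lambda>k. (d/16) * (1/2::real)^k)"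
    by (auto simp: power_add power_one_over field_simps)
  have "(\<lambda>k. (d/16) * (1/2::real)^k) \<longlonglongrightarrow> (d/16) * 0"
    by (rule tendsto_mult[OF tendsto_const LIMSEQ_power_zero]) simp
  then show ?thesis unfolding eq by simp
qed

lemma main_real:
  fixes E :: "complex set" and f :: "complex \<Rightarrow> complex" and M :: "complex \<Rightarrow> real" and r0 :: real
  assumes r0: "0 < r0" "r0 < 1" and cE: "compact E" and Es: "E \<subseteq> sphere 0 1 \<union> sphere 0 r0"
    and n1: "negligible {t\<in>{0..2*pi}. complex_of_real 1 * cis t \<in> E}"
    and n2: "negligible {t\<in>{0..2*pi}. complex_of_real r0 * cis t \<in> E}"
    and cf: "continuous_on E f" and cM: "continuous_on (sphere 0 1 \<union> sphere 0 r0) M"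
    and Mpos: "\<forall>z\<in>sphere 0 1 \<union> sphere 0 r0. 0 < M z"
    and fM: "\<forall>z\<in>E. norm (f z) < M z"
  shows "\<exists>F. continuous_on {z. r0 \<le> cmod z \<and> cmod z \<le> 1} F \<and> F holomorphic_on {z. r0 < cmod z \<and> cmod z < 1}
     \<and> (\<forall>z\<in>sphere 0 1 \<union> sphere 0 r0. norm (F z) < M z) \<and> (\<forall>z\<in>E. F z = f z)"
proof -
  define Ac where "Ac = {z::complex. r0 \<le> cmod z \<and> cmod z \<le> 1}"
  define Ao where "Ao = {z::complex. r0 < cmod z \<and> cmod z < 1}"
  define B where "B = sphere (0::complex) 1 \<union> sphere 0 r0"
  have BAc: "B \<subseteq> Ac" unfolding B_def Ac_def using r0 by auto
  have EB: "E \<subseteq> B" using Es unfolding B_def .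
  have AoAc: "Ao \<subseteq> Ac" unfolding Ao_def Ac_def by auto
  have cB: "compact B" unfolding B_def by auto
  have oAo: "open Ao" unfolding Ao_def using Ac_topo[OF r0] by simp
  have cME: "continuous_on E (\<lambda>z. M z - norm (f z))"
    using continuous_on_subset[OF cM Es] cf by (intro continuous_intros)
  obtain \<delta>0 where d0: "\<delta>0 > 0" "\<forall>z\<in>E. \<delta>0 \<le> M z - norm (f z)"
    using pos_gap[OF cE cME] fM by auto
  define \<epsilon> where "\<epsilon> = (\<lambda>k::nat. \<delta>0 / 2^(k+4))"
  have ep: "\<epsilon> k > 0" for k unfolding \<epsilon>_def using d0 by simp
  obtain F1 where F1: "continuous_on Ac F1" "F1 holomorphic_on Ao" "\<forall>z\<in>E. norm (F1 z - f z) < \<epsilon> 0"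
      "\<forall>z\<in>B. norm (F1 z) < M z"
    using bapprox[OF r0 cE Es n1 n2 cf cM Mpos fM ep[of 0]] unfolding Ac_def Ao_def B_def by blast
  define d1 where "d1 = (\<lambda>z. M z - norm (F1 z))"
  have d1p: "d1 z > 0" if "z \<in> B" for z using F1(4) that unfolding d1_def by force
  have cd1: "continuous_on B d1" unfolding d1_def
    using cM[folded B_def] continuous_on_subset[OF F1(1) BAc] by (intro continuous_intros)
  have d1E: "d1 z \<ge> \<delta>0/2" if zE: "z \<in> E" for z
  proof -
    have "norm (F1 z) \<le> norm (f z) + norm (F1 z - f z)" using norm_triangle_ineq[of "f z" "F1 z - f z"] by simp
    moreover have "norm (F1 z - f z) < \<delta>0/16" using F1(3) zE unfolding \<epsilon>_def by simp
    ultimately show ?thesis using d0 zE unfolding d1_def by force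
  qed
  have "bounded (d1 ` B)" by (rule compact_imp_bounded[OF compact_continuous_image[OF cd1 cB]])
  then obtain a where a: "\<forall>x\<in>d1 ` B. norm x \<le> a" unfolding bounded_iff by blast
  define C0 where "C0 = \<bar>a\<bar> + 1"
  have C0: "C0 > 0" "\<forall>z\<in>B. d1 z \<le> C0" using a unfolding C0_def by force+
  define P where "P = (\<lambda>n G F. continuous_on Ac F \<and> F holomorphic_on Ao \<and> (\<forall>z\<in>E. norm (F z - (f z - G z)) < \<epsilon> (Suc n))
      \<and> (\<forall>z\<in>B. norm (F z) < d1 z / 2^(n+2)))"
  define Dn where "Dn = (\<lambda>n G. SOME F. P n G F)"
  define Gs where "Gs = rec_nat F1 (\<lambda>n G. (\<lambda>z. G z + Dn n G z))"
  have Gs0: "Gs 0 = F1" unfolding Gs_def by simp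
  have GsS: "Gs (Suc n) = (\<lambda>z. Gs n z + Dn n (Gs n) z)" for n unfolding Gs_def by simp
  define Inv where "Inv = (\<lambda>n. continuous_on Ac (Gs n) \<and> Gs n holomorphic_on Ao \<and> (\<forall>z\<in>E. norm (f z - Gs n z) < \<epsilon> n))"
  have ex: "\<exists>F. P n (Gs n) F" if I: "Inv n" for n
  proof -
    have cG: "continuous_on E (\<lambda>z. f z - Gs n z)"
      using I cf continuous_on_subset[of Ac "Gs n" E] EB BAc unfolding Inv_def by (intro continuous_intros) auto
    have cMn: "continuous_on (sphere 0 1 \<union> sphere 0 r0) (\<lambda>z. d1 z / 2^(n+2))"
      using cd1 unfolding B_def by (intro continuous_intros) auto
    have pMn: "\<forall>z\<in>sphere 0 1 \<union> sphere 0 r0. 0 < d1 z / 2^(n+2)" using d1p unfolding B_def by simp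
    have fMn: "\<forall>z\<in>E. norm (f z - Gs n z) < d1 z / 2^(n+2)"
    proof
      fix z assume zE: "z \<in> E"
      have "norm (f z - Gs n z) < \<delta>0 / 2^(n+4)" using I zE unfolding Inv_def \<epsilon>_def by blast
      also have "\<dots> < (\<delta>0/2) / 2^(n+2)" using d0 by (simp add: power_add field_simps)
      also have "\<dots> \<le> d1 z / 2^(n+2)" by (intro divide_right_mono) (use d1E[OF zE] in auto)
      finally show "norm (f z - Gs n z) < d1 z / 2^(n+2)" .
    qed
    show ?thesis using bapprox[OF r0 cE Es n1 n2 cG cMn pMn fMn ep[of "Suc n"]]
      unfolding P_def Ac_def Ao_def B_def by blast
  qed
  have inv: "Inv n" for n
  proof (induction n)
    case 0 then show ?case unfolding Inv_def Gs0 using F1 by (simp add: norm_minus_commute)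
  next
    case (Suc n)
    have PD: "P n (Gs n) (Dn n (Gs n))" unfolding Dn_def by (rule someI_ex[OF ex[OF Suc]])
    show ?case unfolding Inv_def GsS
    proof (intro conjI ballI)
      show "continuous_on Ac (\<lambda>z. Gs n z + Dn n (Gs n) z)"
        using Suc PD unfolding Inv_def P_def by (intro continuous_intros) auto
      show "(\<lambda>z. Gs n z + Dn n (Gs n) z) holomorphic_on Ao"
        using Suc PD unfolding Inv_def P_def by (intro holomorphic_intros) auto
      fix z assume "z \<in> E"
      then have "norm (Dn n (Gs n) z - (f z - Gs n z)) < \<epsilon> (Suc n)" using PD unfolding P_def by blast
      then show "norm (f z - (Gs n z + Dn n (Gs n) z)) < \<epsilon> (Suc n)"
        by (simp add: norm_minus_commute algebra_simps)
    qed
  qed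
  have PD: "P n (Gs n) (Dn n (Gs n))" for n unfolding Dn_def by (rule someI_ex[OF ex[OF inv]])
  define u where "u = (\<lambda>k z. Gs (Suc k) z - Gs k z)"
  have u_eq: "u k = Dn k (Gs k)" for k unfolding u_def GsS by simp
  have cu: "continuous_on Ac (u k)" for k using PD[of k] unfolding u_eq P_def by blast
  have hu: "u k holomorphic_on Ao" for k using PD[of k] unfolding u_eq P_def by blast
  have uB: "norm (u k z) < d1 z / 2^(k+2)" if "z \<in> B" for k z using PD[of k] that unfolding u_eq P_def by blast
  have uA: "norm (u k z) \<le> C0 / 2^(k+2)" if zA: "z \<in> Ac" for k z
  proof (rule max_Ac[OF r0 cu[unfolded Ac_def] hu[unfolded Ao_def]])
    show "\<forall>z\<in>sphere 0 1 \<union> sphere 0 r0. norm (u k z) \<le> C0 / 2^(k+2)"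
    proof
      fix w :: complex assume "w \<in> sphere 0 1 \<union> sphere 0 r0"
      then have wB: "w \<in> B" unfolding B_def .
      have "d1 w / 2^(k+2) \<le> C0 / 2^(k+2)" using C0(2) wB by (simp add: divide_right_mono)
      then show "norm (u k w) \<le> C0 / 2^(k+2)" using uB[OF wB, of k] by linarith
    qed
    show "z \<in> {z. r0 \<le> cmod z \<and> cmod z \<le> 1}" using zA unfolding Ac_def .
  qed
  have sumC: "summable (\<lambda>k. C0 / 2^(k+2))" using geo_sum[of C0] by (rule sums_summable)
  have ul: "uniform_limit Ac (\<lambda>n z. \<Sum>k<n. u k z) (\<lambda>z. \<Sum>k. u k z) sequentially"
    by (rule Weierstrass_m_test[OF uA sumC])
  define G where "G = (\<lambda>z. F1 z + (\<Sum>k. u k z))"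
  have Gs_eq: "Gs n z = F1 z + (\<Sum>k<n. u k z)" for n z
    unfolding u_def using sum_lessThan_telescope[of "\<lambda>k. Gs k z" n] Gs0 by simp
  have cS: "continuous_on Ac (\<lambda>z. \<Sum>k. u k z)"
    by (rule uniform_limit_theorem[OF _ ul]) (auto intro!: always_eventually continuous_on_sum cu)
  have hS: "(\<lambda>z. \<Sum>k. u k z) holomorphic_on Ao"
  proof (rule holomorphic_uniform_sequence[OF oAo])
    show "(\<lambda>z. \<Sum>k<n. u k z) holomorphic_on Ao" for n by (intro holomorphic_on_sum hu)
    fix x assume "x \<in> Ao"
    then obtain e where e: "e > 0" "ball x e \<subseteq> Ao" using oAo open_contains_ball by blast
    have "cball x (e/2) \<subseteq> ball x e" using e(1) by (auto simp: subset_eq)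
    then have "cball x (e/2) \<subseteq> Ao" using e(2) by blast
    then show "\<exists>d>0. cball x d \<subseteq> Ao \<and> uniform_limit (cball x d) (\<lambda>n z. \<Sum>k<n. u k z) (\<lambda>z. \<Sum>k. u k z) sequentially"
      using e AoAc uniform_limit_on_subset[OF ul] by (intro exI[of _ "e/2"]) auto
  qed
  have cG: "continuous_on Ac G" unfolding G_def using F1(1) cS by (intro continuous_intros)
  have hG: "G holomorphic_on Ao" unfolding G_def using F1(2) hS by (intro holomorphic_intros)
  have GE: "G z = f z" if zE: "z \<in> E" for z
  proof -
    have zA: "z \<in> Ac" using zE EB BAc by blast
    have "(\<lambda>n. \<Sum>k<n. u k z) \<longlonglongrightarrow> (\<Sum>k. u k z)" by (rule tendsto_uniform_limitI[OF ul zA])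
    then have l1: "(\<lambda>n. Gs n z) \<longlonglongrightarrow> G z" unfolding Gs_eq G_def by (intro tendsto_add tendsto_const)
    have "(\<lambda>n. f z - Gs n z) \<longlonglongrightarrow> 0"
    proof (rule Lim_null_comparison)
      show "\<forall>\<^sub>F n in sequentially. norm (f z - Gs n z) \<le> \<epsilon> n"
        using inv zE unfolding Inv_def by (intro always_eventually allI less_imp_le) blast
      show "\<epsilon> \<longlonglongrightarrow> 0" unfolding \<epsilon>_def by (rule eps_lim)
    qed
    then have "(\<lambda>n. f z - (f z - Gs n z)) \<longlonglongrightarrow> f z - 0" by (intro tendsto_diff tendsto_const)
    then have l2: "(\<lambda>n. Gs n z) \<longlonglongrightarrow> f z" by simp
    show ?thesis using LIMSEQ_unique[OF l1 l2] .
  qed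
  have GB: "norm (G z) < M z" if zB: "z \<in> B" for z
  proof -
    have zA: "z \<in> Ac" using zB BAc by blast
    have sn: "summable (\<lambda>k. norm (u k z))"
      by (rule summable_comparison_test'[OF sumC]) (use uA[OF zA] in simp)
    have sd: "(\<lambda>k. d1 z / 2^(k+2)) sums (d1 z / 2)" by (rule geo_sum)
    have "norm (\<Sum>k. u k z) \<le> (\<Sum>k. norm (u k z))" by (rule summable_norm[OF sn])
    also have "\<dots> \<le> (\<Sum>k. d1 z / 2^(k+2))"
      by (rule suminf_le) (use uB[OF zB] sn sums_summable[OF sd] in \<open>auto intro: less_imp_le\<close>)
    also have "\<dots> = d1 z / 2" using sd by (simp add: sums_iff)
    finally have "norm (\<Sum>k. u k z) \<le> d1 z / 2" .
    moreover have "norm (G z) \<le> norm (F1 z) + norm (\<Sum>k. u k z)" unfolding G_def by (rule norm_triangle_ineq)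
    moreover have "d1 z / 2 < d1 z" using d1p[OF zB] by simp
    moreover have "norm (F1 z) + d1 z = M z" unfolding d1_def by simp
    ultimately show ?thesis by linarith
  qed
  show ?thesis using cG hG GE GB unfolding Ac_def Ao_def B_def by blast
qed

theorem proposition2p4:
  fixes r0 :: real and E :: "complex set" and f :: "complex \<Rightarrow> complex"
    and M :: "complex \<Rightarrow> ereal"
  assumes "0 < r0" "r0 < 1"
    and "closed E" "E \<subseteq> sphere 0 1 \<union> sphere 0 r0"
    and "annulus_bdry_null r0 E"
    and "continuous_on E f"
    and "continuous_on (sphere 0 1 \<union> sphere 0 r0) M"
    and "\<forall>z \<in> sphere 0 1 \<union> sphere 0 r0. 0 < M z"
    and "\<forall>z \<in> E. ereal (cmod (f z)) < M z"
  shows "\<exists>F. continuous_on {z. r0 \<le> cmod z \<and> cmod z \<le> 1} F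
           \<and> F holomorphic_on {z. r0 < cmod z \<and> cmod z < 1}
           \<and> (\<forall>z \<in> sphere 0 1 \<union> sphere 0 r0. ereal (cmod (F z)) < M z)
           \<and> (\<forall>z \<in> E. F z = f z)"
proof -
  note r0 = assms(1,2)
  define B where "B = sphere (0::complex) 1 \<union> sphere 0 r0"
  have e1: "{t\<in>{0..2*pi}. complex_of_real 1 * cis t \<in> E \<inter> sphere 0 1} = {t\<in>{0..2*pi}. complex_of_real 1 * cis t \<in> E}"
    by auto
  have e2: "{t\<in>{0..2*pi}. complex_of_real r0 * cis t \<in> E \<inter> sphere 0 r0} = {t\<in>{0..2*pi}. complex_of_real r0 * cis t \<in> E}"
    using r0 by (auto simp: norm_mult)
  have n1: "negligible {t\<in>{0..2*pi}. complex_of_real 1 * cis t \<in> E}"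
    using assms(5) unfolding annulus_bdry_null_def circle_null_def e1
    by (simp add: negligible_iff_null_sets null_sets_completionI)
  have n2: "negligible {t\<in>{0..2*pi}. complex_of_real r0 * cis t \<in> E}"
    using assms(5) unfolding annulus_bdry_null_def circle_null_def e2
    by (simp add: negligible_iff_null_sets null_sets_completionI)
  have "E = cball 0 1 \<inter> E" using assms(4) r0 by auto
  then have cE: "compact E" using compact_Int_closed[OF compact_cball assms(3), of 0 1] by simp
  have "bounded (f ` E)" by (rule compact_imp_bounded[OF compact_continuous_image[OF assms(6) cE]])
  then obtain a where a: "\<forall>x\<in>f ` E. norm x \<le> a" unfolding bounded_iff by blast
  define C0 where "C0 = \<bar>a\<bar> + 1"
  have C0: "C0 > 0" "\<forall>z\<in>E. norm (f z) < C0" using a unfolding C0_def by force+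
  define m where "m = (\<lambda>z. min (M z) (ereal C0))"
  define M' where "M' = (\<lambda>z. real_of_ereal (m z))"
  have mfin: "\<bar>m z\<bar> \<noteq> \<infinity>" "0 < m z" if "z \<in> B" for z
  proof -
    have "0 < M z" using assms(8) that unfolding B_def by blast
    then show "0 < m z" unfolding m_def using C0 by simp
    moreover have "m z \<le> ereal C0" unfolding m_def by simp
    ultimately show "\<bar>m z\<bar> \<noteq> \<infinity>" by auto
  qed
  have mM: "ereal (M' z) = m z" if "z \<in> B" for z unfolding M'_def using mfin[OF that] by (simp add: ereal_real)
  have cm: "continuous_on B m" unfolding m_def using assms(7)[folded B_def] by (intro continuous_intros)
  have cM': "continuous_on B M'" unfolding M'_def
  proof (rule continuous_on_compose2[OF _ cm])
    show "continuous_on {x. \<bar>x\<bar> \<noteq> \<infinity>} real_of_ereal"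
      by (rule continuous_at_imp_continuous_on) (auto intro: continuous_at_of_ereal)
    show "m ` B \<subseteq> {x. \<bar>x\<bar> \<noteq> \<infinity>}"
    proof
      fix y assume "y \<in> m ` B"
      then obtain z where "z \<in> B" "y = m z" by blast
      then show "y \<in> {x. \<bar>x\<bar> \<noteq> \<infinity>}" using mfin(1)[of z] by simp
    qed
  qed
  have M'pos: "\<forall>z\<in>B. 0 < M' z"
  proof
    fix z assume "z \<in> B"
    then have "0 < ereal (M' z)" using mM mfin by simp
    then show "0 < M' z" by simp
  qed
  have fM': "\<forall>z\<in>E. norm (f z) < M' z"
  proof
    fix z assume zE: "z \<in> E"
    then have zB: "z \<in> B" using assms(4) unfolding B_def by blast
    have "ereal (norm (f z)) < m z" unfolding m_def using assms(9) zE C0(2) by simp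
    then have "ereal (norm (f z)) < ereal (M' z)" using mM[OF zB] by simp
    then show "norm (f z) < M' z" by simp
  qed
  obtain F where F: "continuous_on {z. r0 \<le> cmod z \<and> cmod z \<le> 1} F" "F holomorphic_on {z. r0 < cmod z \<and> cmod z < 1}"
    "\<forall>z\<in>B. norm (F z) < M' z" "\<forall>z\<in>E. F z = f z"
    using main_real[OF r0 cE assms(4) n1 n2 assms(6) cM'[unfolded B_def] M'pos[unfolded B_def] fM']
    unfolding B_def by blast
  have "ereal (cmod (F z)) < M z" if zB: "z \<in> B" for z
  proof -
    have "ereal (cmod (F z)) < ereal (M' z)" using F(3) zB by simp
    also have "\<dots> = m z" by (rule mM[OF zB])
    also have "\<dots> \<le> M z" unfolding m_def by simp
    finally show ?thesis .
  qed
  then show ?thesis using F unfolding B_def by blast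
qed

end
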